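(* Let $V$ be a finite set of variables and let $D_{\mathit{dag}}$ be the ABA framework defined in the context. Then the set of preferred extensions of $D_{\mathit{dag}}$ equals the set of stable extensions of $D_{\mathit{dag}}$.
   Context: Assumption-based argumentation (ABA). An ABA framework (ABAF) is a tuple $D=(\mathcal L,\mathcal R,\mathcal A,\overline{\cdot})$ where $\mathcal L$ is a set of sentences, $\mathcal R$ is a set of rules $a_0\leftarrow a_1,\dots,a_n$ ($n\ge 0$), $\mathcal A\subseteq\mathcal L$ is a set of assumptions and $\overline{\cdot}:\mathcal A\to\mathcal L$ is the contrary function. For $S\subseteq\mathcal A$, $S\vdash q$ if there is a finite rooted labelled tree whose root is labelled $q$, whose set of leaf labels is $S$ or $S\cup\{\top\}$, and in which every inner node is labelled $\mathrm{head}(r)$ for some $r\in\mathcal R$ with children labelled by the distinct elements of $\mathrm{body}(r)$ (or a single child $\top$ if the body is empty). $S$ attacks $T\subseteq\mathcal A$ if there are $S'\subseteq S$ and $a\in T$ with $S'\vdash\overline a$. $S$ is conflict-free if it does not attack itself; $S$ defends $T$ if $S$ attacks every set of assumptions attacking $T$; admissible if conflict-free and it defends itself; complete if admissible and it contains every assumption set it defends; preferred if $\subseteq$-maximal among complete sets; stable if admissible and it attacks $\{a\}$ for every $a\in\mathcal A\setminus S$. The framework $D_{\mathit{dag}}$: for a finite set $V$ of variables, assumptions are $\mathit{arr}_{xy}$ for all ordered pairs $x\neq y$ in $V$ and one assumption $\mathit{noe}_{xy}=\mathit{noe}_{yx}$ per unordered pair of distinct variables; each assumption $a$ has its own distinct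 fresh contrary $\overline a$; rules are (i) $\overline a\leftarrow b$ for all distinct $a,b\in\{\mathit{arr}_{xy},\mathit{arr}_{yx},\mathit{noe}_{xy}\}$; (ii) for each sequence $x_1\dots x_k$ of variables with consecutive elements distinct and $x_1=x_k$, and each $1\le i<k$, the rule $\overline{\mathit{arr}_{x_ix_{i+1}}}\leftarrow \mathit{arr}_{x_1x_2},\dots,\mathit{arr}_{x_{k-1}x_k}$. *)

theory Defs
  imports Main
begin

text \<open>An ABA framework is given by a set of rules R (pairs of a head sentence and
the set of the distinct body sentences), a set of assumptions A, and a contrary
function ctr (only its values on A matter).\<close>

type_synonym 'l rule = "'l \<times> 'l set"

text \<open>derives R A S q: there is a finite derivation tree of q whose set of
assumption leaves is exactly S (leaves labelled by the top element, arising from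
rules with empty body, contribute nothing).\<close>
inductive derives :: "'l rule set \<Rightarrow> 'l set \<Rightarrow> 'l set \<Rightarrow> 'l \<Rightarrow> bool"
  for R :: "'l rule set" and A :: "'l set" where
  leaf: "a \<in> A \<Longrightarrow> derives R A {a} a"
| rule: "(h, B) \<in> R \<Longrightarrow> finite B \<Longrightarrow> (\<forall>b\<in>B. derives R A (f b) b)
          \<Longrightarrow> derives R A (\<Union>b\<in>B. f b) h"

definition attacks :: "'l rule set \<Rightarrow> 'l set \<Rightarrow> ('l \<Rightarrow> 'l) \<Rightarrow> 'l set \<Rightarrow> 'l set \<Rightarrow> bool" where
  "attacks R A ctr S T \<longleftrightarrow> (\<exists>S' a. S' \<subseteq> S \<and> a \<in> T \<and> derives R A S' (ctr a))"

definition conflict_free :: "'l rule set \<Rightarrow> 'l set \<Rightarrow> ('l \<Rightarrow> 'l) \<Rightarrow> 'l set \<Rightarrow> bool" where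
  "conflict_free R A ctr S \<longleftrightarrow> S \<subseteq> A \<and> \<not> attacks R A ctr S S"

definition defends :: "'l rule set \<Rightarrow> 'l set \<Rightarrow> ('l \<Rightarrow> 'l) \<Rightarrow> 'l set \<Rightarrow> 'l set \<Rightarrow> bool" where
  "defends R A ctr S T \<longleftrightarrow>
     (\<forall>U. U \<subseteq> A \<longrightarrow> attacks R A ctr U T \<longrightarrow> attacks R A ctr S U)"

definition admissible :: "'l rule set \<Rightarrow> 'l set \<Rightarrow> ('l \<Rightarrow> 'l) \<Rightarrow> 'l set \<Rightarrow> bool" where
  "admissible R A ctr S \<longleftrightarrow> conflict_free R A ctr S \<and> defends R A ctr S S"

definition complete :: "'l rule set \<Rightarrow> 'l set \<Rightarrow> ('l \<Rightarrow> 'l) \<Rightarrow> 'l set \<Rightarrow> bool" where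
  "complete R A ctr S \<longleftrightarrow> admissible R A ctr S \<and>
     (\<forall>T. T \<subseteq> A \<longrightarrow> defends R A ctr S T \<longrightarrow> T \<subseteq> S)"

definition preferred :: "'l rule set \<Rightarrow> 'l set \<Rightarrow> ('l \<Rightarrow> 'l) \<Rightarrow> 'l set \<Rightarrow> bool" where
  "preferred R A ctr S \<longleftrightarrow> complete R A ctr S \<and>
     (\<forall>T. complete R A ctr T \<longrightarrow> S \<subseteq> T \<longrightarrow> T = S)"

definition stable :: "'l rule set \<Rightarrow> 'l set \<Rightarrow> ('l \<Rightarrow> 'l) \<Rightarrow> 'l set \<Rightarrow> bool" where
  "stable R A ctr S \<longleftrightarrow> admissible R A ctr S \<and>
     (\<forall>a \<in> A - S. attacks R A ctr S {a})"

text \<open>Assumptions: arr x y, and noe {x,y} (one per unordered pair, so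
noe_xy = noe_yx). Sentences: assumptions and one fresh contrary per assumption.\<close>
datatype 'v asm = Arr 'v 'v | Noe "'v set"
datatype 'v dsent = As "'v asm" | Ct "'v asm"

fun dag_ctr :: "'v dsent \<Rightarrow> 'v dsent" where
  "dag_ctr (As a) = Ct a"
| "dag_ctr (Ct a) = Ct a"  \<comment> \<open>irrelevant: contrary is only used on assumptions\<close>

definition dag_asms :: "'v set \<Rightarrow> 'v dsent set" where
  "dag_asms V = {As (Arr x y) | x y. x \<in> V \<and> y \<in> V \<and> x \<noteq> y}
              \<union> {As (Noe {x, y}) | x y. x \<in> V \<and> y \<in> V \<and> x \<noteq> y}"

definition dag_rules_i :: "'v set \<Rightarrow> 'v dsent rule set" where
  "dag_rules_i V = {(Ct a, {As b}) | a b x y. x \<in> V \<and> y \<in> V \<and> x \<noteq> y \<and>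
      a \<in> {Arr x y, Arr y x, Noe {x, y}} \<and> b \<in> {Arr x y, Arr y x, Noe {x, y}} \<and> a \<noteq> b}"

text \<open>Rules (ii): for a sequence xs = x_1 ... x_k of variables (0-indexed here) with
consecutive elements distinct and x_1 = x_k, and each position i < k-1 (0-indexed),
the rule with head the contrary of arr_{x_i x_(i+1)} and body all arr_{x_j x_(j+1)}.\<close>
definition dag_rules_ii :: "'v set \<Rightarrow> 'v dsent rule set" where
  "dag_rules_ii V = {(Ct (Arr (xs ! i) (xs ! Suc i)),
                       {As (Arr (xs ! j) (xs ! Suc j)) | j. j < length xs - 1}) | xs i.
      xs \<noteq> [] \<and> set xs \<subseteq> V \<and> (\<forall>j < length xs - 1. xs ! j \<noteq> xs ! Suc j) \<and>
      hd xs = last xs \<and> i < length xs - 1}"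

definition dag_rules :: "'v set \<Rightarrow> 'v dsent rule set" where
  "dag_rules V = dag_rules_i V \<union> dag_rules_ii V"

end

theory Submission
  imports Defs
begin

lemma attacks_mono:
  "attacks R A c S T \<Longrightarrow> S \<subseteq> S2 \<Longrightarrow> T \<subseteq> T2 \<Longrightarrow> attacks R A c S2 T2"
  unfolding attacks_def by blast

lemma stable_complete:
  assumes "stable R A c S" shows "complete R A c S"
proof -
  have adm: "admissible R A c S" and out: "\<forall>a\<in>A - S. attacks R A c S {a}"
    using assms by (auto simp: stable_def)
  have cf: "\<not> attacks R A c S S" "S \<subseteq> A" using adm by (auto simp: admissible_def conflict_free_def)
  have "T \<subseteq> S" if "T \<subseteq> A" "defends R A c S T" for T
  proof
    fix t assume t: "t \<in> T"
    show "t \<in> S"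
    proof (rule ccontr)
      assume "t \<notin> S"
      then have "attacks R A c S {t}" using out t that(1) by blast
      then obtain S' a where S': "S' \<subseteq> S" "a \<in> {t}" "derives R A S' (c a)"
        unfolding attacks_def by blast
      have "attacks R A c S' T" unfolding attacks_def using S' t by blast
      moreover have "S' \<subseteq> A" using S' cf by blast
      ultimately have "attacks R A c S S'" using that(2) unfolding defends_def by blast
      then have "attacks R A c S S" using attacks_mono S' by blast
      then show False using cf by blast
    qed
  qed
  then show ?thesis using adm unfolding complete_def by blast
qed

lemma stable_preferred:
  assumes "stable R A c S" shows "preferred R A c S"
proof -
  have out: "\<forall>a\<in>A - S. attacks R A c S {a}" using assms by (auto simp: stable_def)
  have "T = S" if tc: "complete R A c T" and ts: "S \<subseteq> T" for T
  proof (rule ccontr)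
    assume "T \<noteq> S"
    then obtain t where t: "t \<in> T" "t \<notin> S" using ts by blast
    have cf: "\<not> attacks R A c T T" "T \<subseteq> A" using tc
      by (auto simp: complete_def admissible_def conflict_free_def)
    have "attacks R A c S {t}" using out t cf by blast
    then have "attacks R A c T T" using attacks_mono t ts by blast
    then show False using cf by blast
  qed
  then show ?thesis using stable_complete[OF assms] unfolding preferred_def by blast
qed

lemma cf_out_stable:
  assumes cf: "conflict_free R A c S" and out: "\<forall>a\<in>A - S. attacks R A c S {a}"
  shows "stable R A c S"
proof -
  have "attacks R A c S U" if U: "U \<subseteq> A" "attacks R A c U S" for U
  proof -
    obtain U' a where U': "U' \<subseteq> U" "a \<in> S" "derives R A U' (c a)"
      using U(2) unfolding attacks_def by blast
    show ?thesis
    proof (cases "U' \<subseteq> S")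
      case True
      then have "attacks R A c S S" unfolding attacks_def using U' by blast
      then show ?thesis using cf unfolding conflict_free_def by blast
    next
      case False
      then obtain u where "u \<in> U'" "u \<notin> S" by blast
      then have "attacks R A c S {u}" using out U U' by blast
      then show ?thesis using attacks_mono \<open>u \<in> U'\<close> U' by blast
    qed
  qed
  then show ?thesis using assms unfolding stable_def admissible_def defends_def by blast
qed

definition mates :: "'v set \<Rightarrow> 'v asm \<Rightarrow> 'v asm \<Rightarrow> bool" where
  "mates V a b \<longleftrightarrow> (\<exists>x y. x \<in> V \<and> y \<in> V \<and> x \<noteq> y \<and>
      a \<in> {Arr x y, Arr y x, Noe {x, y}} \<and> b \<in> {Arr x y, Arr y x, Noe {x, y}} \<and> a \<noteq> b)"

lemma rules_i_iff: "(h, B) \<in> dag_rules_i V \<longleftrightarrow> (\<exists>a b. h = Ct a \<and> B = {As b} \<and> mates V a b)"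
  unfolding dag_rules_i_def mates_def by blast

lemma rules_ii_body:
  assumes "(Ct a, B) \<in> dag_rules_ii V"
  shows "As a \<in> B \<and> (\<forall>e\<in>B. \<exists>u v. e = As (Arr u v))"
  using assms unfolding dag_rules_ii_def by blast

lemma rule_heads: "(h, B) \<in> dag_rules V \<Longrightarrow> \<exists>c. h = Ct c"
  unfolding dag_rules_def dag_rules_i_def dag_rules_ii_def by blast

lemma rule_i_body_asms: assumes "(h, B) \<in> dag_rules_i V" shows "B \<subseteq> dag_asms V"
proof -
  obtain a b x y where r: "B = {As b}" "x \<in> V" "y \<in> V" "x \<noteq> y"
    "b \<in> {Arr x y, Arr y x, Noe {x, y}}"
    using assms unfolding dag_rules_i_def by blast
  have "As (Arr x y) \<in> dag_asms V" "As (Arr y x) \<in> dag_asms V" "As (Noe {x, y}) \<in> dag_asms V"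
    using r unfolding dag_asms_def by blast+
  then show ?thesis using r by auto
qed

lemma rule_ii_body_asms: "(h, B) \<in> dag_rules_ii V \<Longrightarrow> B \<subseteq> dag_asms V"
proof
  fix e assume "(h, B) \<in> dag_rules_ii V" "e \<in> B"
  then obtain xs j where xs: "set xs \<subseteq> V" "\<forall>j < length xs - 1. xs ! j \<noteq> xs ! Suc j"
    "j < length xs - 1" "e = As (Arr (xs ! j) (xs ! Suc j))"
    unfolding dag_rules_ii_def by blast
  have "xs ! j \<in> V" "xs ! Suc j \<in> V" using xs(1,3) nth_mem[of j xs] nth_mem[of "Suc j" xs] by auto
  then show "e \<in> dag_asms V" using xs unfolding dag_asms_def by blast
qed

lemma rule_body_asms: "(h, B) \<in> dag_rules V \<Longrightarrow> B \<subseteq> dag_asms V"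
  unfolding dag_rules_def using rule_i_body_asms rule_ii_body_asms by blast

lemma fin_aux: "finite {f j | j. j < (n::nat)}"
proof -
  have "{f j | j. j < n} = f ` {..<n}" by blast
  then show ?thesis by simp
qed

lemma rule_finite: assumes "(h, B) \<in> dag_rules V" shows "finite B"
proof (cases "(h, B) \<in> dag_rules_i V")
  case True
  then show ?thesis unfolding dag_rules_i_def by auto
next
  case False
  then have "(h, B) \<in> dag_rules_ii V" using assms unfolding dag_rules_def by blast
  then obtain xs where "B = {As (Arr (xs ! j) (xs ! Suc j)) | j. j < length xs - 1}"
    unfolding dag_rules_ii_def by blast
  then show ?thesis using fin_aux by simp
qed

lemma derives_As:
  assumes "derives (dag_rules V) A S (As d)" shows "S = {As d}"
  using assms by (cases rule: derives.cases) (auto dest: rule_heads)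

lemma derives_Ct:
  assumes "derives (dag_rules V) (dag_asms V) S (Ct c)" shows "(Ct c, S) \<in> dag_rules V"
  using assms
proof (cases rule: derives.cases)
  case leaf then show ?thesis by (simp add: dag_asms_def)
next
  case (rule B f)
  have "f b = {b}" if bB: "b \<in> B" for b
  proof -
    obtain d where "b = As d" using rule_body_asms[OF rule(2)] bB
      unfolding dag_asms_def by blast
    then show ?thesis using derives_As rule(4) bB by blast
  qed
  then have "S = B" using rule(1) by auto
  then show ?thesis using rule by simp
qed

lemma derives_from_rule:
  assumes "(Ct c, S) \<in> dag_rules V" shows "derives (dag_rules V) (dag_asms V) S (Ct c)"
proof -
  have "derives (dag_rules V) (dag_asms V) (\<Union>b\<in>S. {b}) (Ct c)"
    using rule_body_asms[OF assms] rule_finite[OF assms]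
    by (intro derives.rule[OF assms]) (auto intro: derives.leaf)
  then show ?thesis by simp
qed

lemma attacks_iff:
  "attacks (dag_rules V) (dag_asms V) dag_ctr S T \<longleftrightarrow>
    (\<exists>S' a. S' \<subseteq> S \<and> a \<in> T \<and> (dag_ctr a, S') \<in> dag_rules V)"
proof -
  have "derives (dag_rules V) (dag_asms V) S' (dag_ctr a) \<longleftrightarrow> (dag_ctr a, S') \<in> dag_rules V"
    for S' a by (cases a) (auto intro: derives_Ct derives_from_rule)
  then show ?thesis unfolding attacks_def by blast
qed


lemma rule_cases:
  assumes "(Ct a, B) \<in> dag_rules V"
  shows "(\<exists>b. B = {As b} \<and> mates V a b) \<or> (As a \<in> B \<and> (\<forall>e\<in>B. \<exists>u v. e = As (Arr u v)))"
  using assms rules_i_iff[of "Ct a" B V] rules_ii_body[of a B V] unfolding dag_rules_def by blast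

lemma mates_attack:
  assumes "mates V c b" "As b \<in> S"
  shows "attacks (dag_rules V) (dag_asms V) dag_ctr S {As c}"
proof -
  have "(Ct c, {As b}) \<in> dag_rules V" using assms(1) rules_i_iff[of "Ct c" "{As b}" V]
    unfolding dag_rules_def by blast
  moreover have "{As b} \<subseteq> S" using assms(2) by simp
  moreover have "As c \<in> {As c}" by simp
  ultimately show ?thesis unfolding attacks_iff by (metis dag_ctr.simps(1))
qed

lemma mates_sym: "mates V a b \<Longrightarrow> mates V b a"
  unfolding mates_def by blast

definition undec :: "'v dsent set \<Rightarrow> 'v \<Rightarrow> 'v \<Rightarrow> bool" where
  "undec S x y \<longleftrightarrow> As (Arr x y) \<notin> S \<and> As (Arr y x) \<notin> S \<and> As (Noe {x, y}) \<notin> S"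

lemma undec_swap: assumes "{x', y'} = {x, y}" "undec S x' y'" shows "undec S x y"
proof -
  have "(x' = x \<and> y' = y) \<or> (x' = y \<and> y' = x)" using assms(1) by (simp add: doubleton_eq_iff)
  then show ?thesis using assms(2) unfolding undec_def by (auto simp: insert_commute)
qed

lemma preferred_stable:
  assumes pref: "preferred (dag_rules V) (dag_asms V) dag_ctr S"
  shows "stable (dag_rules V) (dag_asms V) dag_ctr S"
proof -
  let ?R = "dag_rules V" and ?A = "dag_asms V"
  have cfS: "\<not> attacks ?R ?A dag_ctr S S" "S \<subseteq> ?A" using pref
    by (auto simp: preferred_def complete_def admissible_def conflict_free_def)
  define N where "N = {As (Noe {x, y}) | x y. x \<in> V \<and> y \<in> V \<and> x \<noteq> y \<and> undec S x y}"
  define S' where "S' = S \<union> N"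
  have NA: "N \<subseteq> ?A" unfolding N_def dag_asms_def by blast
  have S'A: "S' \<subseteq> ?A" using NA cfS unfolding S'_def by blast
  have noarr: "As (Arr u v) \<notin> N" for u v unfolding N_def by blast
  have cf': "\<not> attacks ?R ?A dag_ctr S' S'"
  proof
    assume "attacks ?R ?A dag_ctr S' S'"
    then obtain T a where T: "T \<subseteq> S'" "a \<in> S'" "(dag_ctr a, T) \<in> ?R"
      unfolding attacks_iff by blast
    obtain c where c: "a = As c" using T(2) S'A unfolding dag_asms_def by blast
    have r: "(Ct c, T) \<in> ?R" using T(3) c by simp
    from rule_cases[OF r] show False
    proof
      assume "\<exists>b. T = {As b} \<and> mates V c b"
      then obtain b where b: "T = {As b}" "mates V c b" by blast
      then obtain x y where xy: "x \<in> V" "y \<in> V" "x \<noteq> y" "c \<in> {Arr x y, Arr y x, Noe {x, y}}"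
        "b \<in> {Arr x y, Arr y x, Noe {x, y}}" "c \<noteq> b" unfolding mates_def by blast
      have bS': "As b \<in> S'" using b T by blast
      have cS': "As c \<in> S'" using c T by blast
      show False
      proof (cases "As c \<in> S \<and> As b \<in> S")
        case True
        then have "attacks ?R ?A dag_ctr S S" using mates_attack[OF b(2), of S]
          using attacks_mono[of ?R ?A dag_ctr S "{As c}" S S] by blast
        then show False using cfS by blast
      next
        case False
        then have "As c \<in> N \<or> As b \<in> N" using bS' cS' unfolding S'_def by blast
        then obtain x' y' where xy': "x' \<in> V" "y' \<in> V" "x' \<noteq> y'" "undec S x' y'"
          "c = Noe {x', y'} \<or> b = Noe {x', y'}" unfolding N_def by blast
        have e: "{x', y'} = {x, y}"
        proof (cases "c = Noe {x', y'}")
          case True then show ?thesis using xy(4) by simp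
        next
          case False then have "b = Noe {x', y'}" using xy'(5) by simp
          then show ?thesis using xy(5) by simp
        qed
        have und: "undec S x y" using undec_swap[OF e xy'(4)] .
        show False
        proof (cases "c = Noe {x', y'}")
          case True
          then have "b = Arr x y \<or> b = Arr y x" using xy(5,6) e by auto
          then have "As b \<in> S" using bS' noarr unfolding S'_def by blast
          then show False using und \<open>b = Arr x y \<or> b = Arr y x\<close> unfolding undec_def by blast
        next
          case False
          then have "b = Noe {x', y'}" using xy' by blast
          then have "c = Arr x y \<or> c = Arr y x" using xy(4,6) e by auto
          then have "As c \<in> S" using cS' noarr unfolding S'_def by blast
          then show False using und \<open>c = Arr x y \<or> c = Arr y x\<close> unfolding undec_def by blast
        qed
      qed
    next
      assume h: "As c \<in> T \<and> (\<forall>e\<in>T. \<exists>u v. e = As (Arr u v))"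
      have "T \<subseteq> S"
      proof
        fix e assume "e \<in> T"
        then obtain u v where "e = As (Arr u v)" using h by blast
        then show "e \<in> S" using \<open>e \<in> T\<close> T(1) noarr unfolding S'_def by blast
      qed
      then have "attacks ?R ?A dag_ctr S S" unfolding attacks_iff using h r
        by (intro exI[of _ T] exI[of _ "As c"]) (simp, blast)
      then show False using cfS by blast
    qed
  qed
  have out': "\<forall>a\<in>?A - S'. attacks ?R ?A dag_ctr S' {a}"
  proof
    fix a assume a: "a \<in> ?A - S'"
    then obtain x y where xy: "x \<in> V" "y \<in> V" "x \<noteq> y" "a = As (Arr x y) \<or> a = As (Noe {x, y})"
      unfolding dag_asms_def by blast
    have m1: "mates V (Arr x y) (Arr y x)" "mates V (Arr x y) (Noe {x, y})"
      "mates V (Noe {x, y}) (Arr x y)" "mates V (Noe {x, y}) (Arr y x)"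
      using xy unfolding mates_def by blast+
    show "attacks ?R ?A dag_ctr S' {a}"
    proof (cases "undec S x y")
      case True
      then have "As (Noe {x, y}) \<in> S'" using xy unfolding S'_def N_def by blast
      then have "a = As (Arr x y)" using a xy by blast
      then show ?thesis using mates_attack[OF m1(2)] \<open>As (Noe {x, y}) \<in> S'\<close> by blast
    next
      case False
      then have d: "As (Arr x y) \<in> S' \<or> As (Arr y x) \<in> S' \<or> As (Noe {x, y}) \<in> S'"
        unfolding undec_def S'_def by blast
      show ?thesis
        using xy(4)
      proof
        assume "a = As (Arr x y)"
        then show ?thesis using d a mates_attack[OF m1(1)] mates_attack[OF m1(2)] by blast
      next
        assume "a = As (Noe {x, y})"
        then show ?thesis using d a mates_attack[OF m1(3)] mates_attack[OF m1(4)] by blast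
      qed
    qed
  qed
  have st: "stable ?R ?A dag_ctr S'"
    using cf_out_stable[OF _ out'] cf' S'A unfolding conflict_free_def by blast
  have "complete ?R ?A dag_ctr S'" using stable_complete[OF st] .
  then have "S' = S" using pref unfolding preferred_def S'_def by blast
  then show ?thesis using st by simp
qed

theorem lemma1:
  fixes V :: "'v set"
  assumes "finite V"
  shows "{S. preferred (dag_rules V) (dag_asms V) dag_ctr S}
       = {S. stable (dag_rules V) (dag_asms V) dag_ctr S}"
  using preferred_stable stable_preferred by blast

end
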